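(* Let $$W(t)=\frac{1}{\sqrt{t^2+4t+1}}\begin{pmatrix}-t&2g(t)+1\\2g(t)+1&t\end{pmatrix}\in M_2(\mathbf C[[t]]).$$ Then $W(t)$ is, up to a sign, the unique element of $\mathrm{GL}(2,\mathbf C[[t]])$ such that (i) $W(t)^2=1$; (ii) $W(t)S_0W(t)=S_0^{-1}$; (iii) $W(t)R(t)W(t)=R(t)^{-1}$; (iv) $W(0)=\begin{pmatrix}0&1\\1&0\end{pmatrix}$.
   Context: $\mathbf C[[t]]$ is the ring of formal power series. $g(t)\in\mathbf C[[t]]$ is the power series $\frac{-1+\sqrt{1+4t}}{2}$, i.e. the unique series with zero constant term satisfying $g(t)^2+g(t)=t$; $\sqrt{t^2+4t+1}$ denotes the power series square root with constant term $1$. $S_0=\begin{pmatrix}0&-1\\1&0\end{pmatrix}$ and $R(t)=\begin{pmatrix}g(t)&1+t\\-1&-1-g(t)\end{pmatrix}$. $W(0)$ denotes the matrix of constant terms. *)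

theory Defs
  imports "HOL-Analysis.Analysis" "HOL-Computational_Algebra.Formal_Power_Series"
begin

definition mat2 :: "'a::zero \<Rightarrow> 'a \<Rightarrow> 'a \<Rightarrow> 'a \<Rightarrow> 'a ^ 2 ^ 2" where
  "mat2 a b c d = (\<chi> i j. if i = 1 then (if j = 1 then a else b) else (if j = 1 then c else d))"

definition gser :: "complex fps" where
  "gser = (THE g. g ^ 2 + g = fps_X \<and> fps_nth g 0 = 0)"

definition sqrtser :: "complex fps" where
  "sqrtser = (THE s. s ^ 2 = fps_X ^ 2 + 4 * fps_X + 1 \<and> fps_nth s 0 = 1)"

definition S0 :: "complex fps ^ 2 ^ 2" where
  "S0 = mat2 0 (-1) 1 0"

definition Rmat :: "complex fps ^ 2 ^ 2" where
  "Rmat = mat2 gser (1 + fps_X) (-1) (-1 - gser)"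

definition Wmat :: "complex fps ^ 2 ^ 2" where
  "Wmat = (\<chi> i j. inverse sqrtser * (mat2 (- fps_X) (2 * gser + 1) (2 * gser + 1) fps_X) $ i $ j)"

definition const_mat :: "complex fps ^ 2 ^ 2 \<Rightarrow> complex ^ 2 ^ 2" where
  "const_mat V = (\<chi> i j. fps_nth (V $ i $ j) 0)"

end

theory Submission imports Defs begin

lemma mat2_nth: "mat2 a b c d $ 1 $ 1 = a" "mat2 a b c d $ 1 $ 2 = b"
  "mat2 a b c d $ 2 $ 1 = c" "mat2 a b c d $ 2 $ 2 = d"
  by (simp_all add: mat2_def)

lemma mat2_eta: "(V::'a::zero^2^2) = mat2 (V$1$1) (V$1$2) (V$2$1) (V$2$2)"
  unfolding vec_eq_iff forall_2 by (simp add: mat2_def)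

lemma mat2_eq: "(mat2 a b c d = mat2 a' b' c' d') \<longleftrightarrow> a = a' \<and> b = b' \<and> c = c' \<and> d = d'"
  unfolding vec_eq_iff forall_2 by (simp add: mat2_def)

lemma mat2_mult: "mat2 a b c d ** mat2 e f g h = mat2 (a*e+b*g) (a*f+b*h) (c*e+d*g) (c*f+d*h)"
  for a :: "'a::semiring_1"
  unfolding vec_eq_iff forall_2 by (simp add: mat2_def matrix_matrix_mult_def sum_2)

lemma mat2_one: "mat 1 = (mat2 1 0 0 1 :: 'a::semiring_1^2^2)"
  unfolding vec_eq_iff forall_2 by (simp add: mat2_def mat_def)

lemma mat2_neg: "- mat2 a b c d = mat2 (-a) (-b) (-c) (-d :: 'a::ab_group_add)"
  unfolding vec_eq_iff forall_2 by (simp add: mat2_def)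

lemma matrix_inv_eq:
  fixes A B :: "'a::semiring_1^'n^'n"
  assumes "A ** B = mat 1" "B ** A = mat 1"
  shows "matrix_inv A = B"
proof -
  have u: "A' = B" if "A ** A' = mat 1 \<and> A' ** A = mat 1" for A'
  proof -
    have "A' = A' ** (A ** B)" using assms by (simp add: matrix_mul_rid)
    also have "\<dots> = (A' ** A) ** B" by (simp add: matrix_mul_assoc)
    also have "\<dots> = B" using that by (simp add: matrix_mul_lid)
    finally show ?thesis .
  qed
  show ?thesis unfolding matrix_inv_def
    by (rule u, rule someI[of _ B]) (use assms in simp)
qed

lemma g_ex: "\<exists>g::complex fps. g ^ 2 + g = fps_X \<and> fps_nth g 0 = 0"
proof -
  define e where "e = fps_radical (\<lambda>_ _. 1) 2 (1 + 4 * fps_X :: complex fps)"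
  have e2: "e ^ 2 = 1 + 4 * fps_X"
    unfolding e_def using power_radical[of "1 + 4 * fps_X :: complex fps" "\<lambda>_ _. 1" 1]
    by (simp add: numeral_2_eq_2)
  have e0: "fps_nth e 0 = 1" unfolding e_def by simp
  define h where "h = fps_const (1/2 :: complex)"
  have h2: "2 * h = 1" unfolding h_def by (simp add: numeral_fps_const fps_const_mult[symmetric] del: fps_const_mult)
  define g where "g = h * (e - 1)"
  have "g ^ 2 + g = fps_X" unfolding g_def using e2 h2 by algebra
  moreover have "fps_nth g 0 = 0" unfolding g_def h_def using e0 by simp
  ultimately show ?thesis by blast
qed

lemma s_ex: "\<exists>s::complex fps. s ^ 2 = fps_X ^ 2 + 4 * fps_X + 1 \<and> fps_nth s 0 = 1"
proof -
  define e where "e = fps_radical (\<lambda>_ _. 1) 2 (fps_X ^ 2 + 4 * fps_X + 1 :: complex fps)"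
  have e2: "e ^ 2 = fps_X ^ 2 + 4 * fps_X + 1"
    unfolding e_def using power_radical[of "fps_X ^ 2 + 4 * fps_X + 1 :: complex fps" "\<lambda>_ _. 1" 1]
    by (simp add: numeral_2_eq_2)
  have e0: "fps_nth e 0 = 1" unfolding e_def by simp
  show ?thesis using e2 e0 by blast
qed


lemma lc1: "(a::'a::comm_ring_1) - b = k * (l - r) \<Longrightarrow> l = r \<Longrightarrow> a = b" by simp

lemma g_props: "gser ^ 2 + gser = fps_X" "fps_nth gser 0 = 0"
proof -
  have "gser ^ 2 + gser = fps_X \<and> fps_nth gser 0 = 0"
    unfolding gser_def
  proof (rule theI')
    show "\<exists>!g::complex fps. g ^ 2 + g = fps_X \<and> fps_nth g 0 = 0"
    proof (rule ex_ex1I[OF g_ex])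
      fix g h :: "complex fps"
      assume g: "g ^ 2 + g = fps_X \<and> fps_nth g 0 = 0" and h: "h ^ 2 + h = fps_X \<and> fps_nth h 0 = 0"
      have "(g - h) * (g + h + 1) = (g^2+g) - (h^2+h)" by (simp add: algebra_simps power2_eq_square)
      also have "\<dots> = 0" using g h by simp
      finally have "(g - h) * (g + h + 1) = 0" .
      moreover have "g + h + 1 \<noteq> 0"
      proof
        assume "g + h + 1 = 0"
        then have "fps_nth (g + h + 1) 0 = 0" by simp
        with g h show False by simp
      qed
      ultimately show "g = h" by simp
    qed
  qed
  then show "gser ^ 2 + gser = fps_X" "fps_nth gser 0 = 0" by auto
qed

lemma s_props: "sqrtser ^ 2 = fps_X ^ 2 + 4 * fps_X + 1" "fps_nth sqrtser 0 = 1"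
proof -
  have "sqrtser ^ 2 = fps_X ^ 2 + 4 * fps_X + 1 \<and> fps_nth sqrtser 0 = 1"
    unfolding sqrtser_def
  proof (rule theI')
    show "\<exists>!s::complex fps. s ^ 2 = fps_X ^ 2 + 4 * fps_X + 1 \<and> fps_nth s 0 = 1"
    proof (rule ex_ex1I[OF s_ex])
      fix g h :: "complex fps"
      assume g: "g ^ 2 = fps_X ^ 2 + 4 * fps_X + 1 \<and> fps_nth g 0 = 1" and h: "h ^ 2 = fps_X ^ 2 + 4 * fps_X + 1 \<and> fps_nth h 0 = 1"
      have "(g - h) * (g + h) = g^2 - h^2" by (simp add: algebra_simps power2_eq_square)
      also have "\<dots> = 0" using g h by simp
      finally have "(g - h) * (g + h) = 0" .
      moreover have "g + h \<noteq> 0"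
      proof
        assume "g + h = 0"
        then have "fps_nth (g + h) 0 = 0" by simp
        with g h show False by simp
      qed
      ultimately show "g = h" by simp
    qed
  qed
  then show "sqrtser ^ 2 = fps_X ^ 2 + 4 * fps_X + 1" "fps_nth sqrtser 0 = 1" by auto
qed

lemma W_eq: "Wmat = mat2 (inverse sqrtser * (- fps_X)) (inverse sqrtser * (2 * gser + 1))
   (inverse sqrtser * (2 * gser + 1)) (inverse sqrtser * fps_X)"
  unfolding Wmat_def vec_eq_iff forall_2 by (simp add: mat2_def)

lemma Rinv: "matrix_inv Rmat = mat2 (-1 - gser) (-(1 + fps_X)) 1 gser"
proof -
  have X: "fps_X = gser^2 + gser" using g_props(1) by simp
  show ?thesis
    unfolding Rmat_def X
    by (intro matrix_inv_eq; simp only: mat2_mult mat2_one mat2_eq; intro conjI; algebra)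
qed

lemma S0inv: "matrix_inv S0 = mat2 0 1 (-1) 0"
  unfolding S0_def
  by (intro matrix_inv_eq) (simp_all add: mat2_mult mat2_one mat2_eq)

theorem lemma7p1:
  shows "invertible Wmat \<and>
         Wmat ** Wmat = mat 1 \<and>
         Wmat ** S0 ** Wmat = matrix_inv S0 \<and>
         Wmat ** Rmat ** Wmat = matrix_inv Rmat \<and>
         const_mat Wmat = mat2 0 1 1 0 \<and>
         (\<forall>V :: complex fps ^ 2 ^ 2. invertible V \<and>
              V ** V = mat 1 \<and>
              V ** S0 ** V = matrix_inv S0 \<and>
              V ** Rmat ** V = matrix_inv Rmat \<and>
              const_mat V = mat2 0 1 1 0
            \<longrightarrow> V = Wmat \<or> V = - Wmat)"
proof -
  define c where "c = inverse sqrtser"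
  define g where "g = gser"
  define s where "s = sqrtser"
  have cs: "c * s = 1" unfolding c_def s_def using s_props(2) by (simp add: inverse_mult_eq_1)
  have Xg: "fps_X = g^2 + g" unfolding g_def using g_props(1) by simp
  have s2: "s ^ 2 = (g^2+g) ^ 2 + 4 * (g^2+g) + 1" unfolding s_def using s_props(1) Xg by simp
  have cP: "c^2 * ((g^2+g)^2 + 4*(g^2+g)+1) = 1"
  proof -
    have "c^2 * ((g^2+g)^2 + 4*(g^2+g)+1) = (c * s) ^ 2" using s2 by (simp add: power_mult_distrib)
    then show ?thesis using cs by simp
  qed
  have W: "Wmat = mat2 (c * (- (g^2+g))) (c * (2 * g + 1)) (c * (2 * g + 1)) (c * (g^2+g))"
    unfolding c_def g_def using W_eq Xg g_def by simp
  have WW: "Wmat ** Wmat = mat 1"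
    unfolding W mat2_mult mat2_one mat2_eq by (intro conjI; (algebra | use cP in algebra))
  have WS: "Wmat ** S0 ** Wmat = matrix_inv S0"
    unfolding W S0inv unfolding S0_def mat2_mult mat2_eq by (intro conjI; (algebra | use cP in algebra))
  have WR: "Wmat ** Rmat ** Wmat = matrix_inv Rmat"
    unfolding W Rinv unfolding Rmat_def mat2_mult mat2_eq g_def[symmetric] Xg
    by (intro conjI; (algebra | use cP in algebra))
  have inv: "invertible Wmat" unfolding invertible_def using WW by blast
  have c0: "fps_nth c 0 = 1" unfolding c_def using s_props(2) by simp
  have cm: "const_mat Wmat = mat2 0 1 1 0"
    unfolding W_eq const_mat_def vec_eq_iff forall_2 using c0 g_props(2)
    by (simp add: mat2_def c_def)
  have uniq: "V = Wmat \<or> V = - Wmat"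
    if VV: "V ** V = mat 1" and VS: "V ** S0 ** V = matrix_inv S0"
      and VR: "V ** Rmat ** V = matrix_inv Rmat" for V :: "complex fps ^ 2 ^ 2"
  proof -
    have comm: "V ** A = B ** V" if "V ** A ** V = B" for A B
    proof -
      have "V ** A = V ** A ** (V ** V)" using VV by (simp add: matrix_mul_rid)
      also have "\<dots> = (V ** A ** V) ** V" by (simp add: matrix_mul_assoc)
      finally show ?thesis using that by simp
    qed
    obtain p q r t where V: "V = mat2 p q r t" using mat2_eta by blast
    have e1: "V ** S0 = mat2 0 1 (-1) 0 ** V" using comm[OF VS] S0inv by simp
    then have "mat2 p q r t ** mat2 0 (-1) 1 0 = mat2 0 1 (-1) 0 ** mat2 p q r t"
      unfolding V S0_def .
    then have "p*0+q*1 = 0*p+1*r \<and> p*(-1)+q*0 = 0*q+1*t" unfolding mat2_mult mat2_eq by blast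
    then have qr: "r = q" and tp: "t = - p" by simp_all
    have e2: "V ** Rmat = mat2 (-1 - g) (-(1 + (g^2+g))) 1 g ** V"
      using comm[OF VR] Rinv Xg g_def by simp
    then have "mat2 p q r t ** mat2 g (1 + (g^2+g)) (-1) (-1 - g) = mat2 (-1 - g) (-(1 + (g^2+g))) 1 g ** mat2 p q r t"
      unfolding V Rmat_def g_def[symmetric] Xg .
    then have "p * g + q * (-1) = (-1 - g) * p + (-(1 + (g^2+g))) * r"
      unfolding mat2_mult mat2_eq by (elim conjE)
    then have h: "p * g + q * (-1) = (-1 - g) * p + (-(1 + (g^2+g))) * q" using qr by simp
    have "p * (2*g+1) - (- ((g^2+g) * q)) = 1 * ((p * g + q * (-1)) - ((-1 - g) * p + (-(1 + (g^2+g))) * q))"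
      by algebra
    from lc1[OF this h] have pa0: "p * (2*g+1) = - ((g^2+g) * q)" .
    have "mat2 p q r t ** mat2 p q r t = mat2 1 0 0 1" using VV unfolding V mat2_one .
    then have "p * p + q * r = 1" unfolding mat2_mult mat2_eq by (elim conjE)
    then have pq1: "p^2 + q^2 = 1" using qr by (simp add: power2_eq_square)
    define a where "a = 2*g+1"
    have a0: "fps_nth a 0 = 1" unfolding a_def g_def using g_props(2) by simp
    define l where "l = q * inverse a"
    have ql: "q = l * a" unfolding l_def using inverse_mult_eq_1[of a] a0 by (simp add: mult.assoc)
    have "a \<noteq> 0" using a0 by auto
    have "p * a = (- ((g^2+g) * l)) * a" using pa0 ql unfolding a_def by (simp add: algebra_simps)
    then have pl: "p = - ((g^2+g) * l)" using mult_right_cancel[OF \<open>a \<noteq> 0\<close>] by blast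
    have "(l * s)^2 = l^2 * ((g^2+g) ^ 2 + 4 * (g^2+g) + 1)" using s2 by (simp add: power_mult_distrib)
    also have "\<dots> = p^2 + q^2" unfolding pl ql a_def by algebra
    finally have ls2: "(l * s)^2 = 1" using pq1 by simp
    have "(l * s - 1) * (l * s + 1) = (l * s)^2 - 1" by (simp add: algebra_simps power2_eq_square)
    then have "(l * s - 1) * (l * s + 1) = 0" using ls2 by simp
    then have "l * s = 1 \<or> l * s = -1" by (auto simp: eq_neg_iff_add_eq_0)
    moreover have "l = c * (l * s)"
    proof -
      have "c * (l * s) = l * (c * s)" by (simp add: ac_simps)
      then show ?thesis using cs by simp
    qed
    ultimately have lc: "l = c \<or> l = - c" by (metis mult.right_neutral mult_minus1_right)
    have Vl: "V = mat2 (l * (- (g^2+g))) (l * (2 * g + 1)) (l * (2 * g + 1)) (l * (g^2+g))"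
      unfolding V qr tp pl ql a_def by (simp add: mat2_eq algebra_simps)
    show ?thesis using lc
    proof
      assume "l = c" then show ?thesis unfolding Vl W by simp
    next
      assume "l = - c" then show ?thesis unfolding Vl W mat2_neg by simp
    qed
  qed
  show ?thesis using inv WW WS WR cm uniq by blast
qed

end
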